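(* For $s \in \{-1,1\}$ and an integer $B \geq 3$, let $I_s(B) = \{t \in \mathbb{Z} : 1 \le t \le B,\ t^2 - 4s > 0\}$, let $N_s(B)$ be the number of distinct square-free parts of the integers $t^2 - 4s$, $t \in I_s(B)$, and let $\Delta_s(B) = \#I_s(B) - N_s(B)$. Then, as $B \to \infty$, $\Delta_{-1}(B) \sim B^{1/3}$ and $\Delta_{1}(B) \sim B^{1/2}$.
   Context: The square-free part of a nonzero integer $n$ is the unique square-free integer $M$ with $n = M r^2$, $r \ge 1$. *)

theory Defs
  imports "HOL-Computational_Algebra.Squarefree" "HOL-Library.Landau_Symbols"
begin

definition sqfree_part :: "int \<Rightarrow> int" where
  "sqfree_part n = (THE M. squarefree M \<and> (\<exists>r::int. r \<ge> 1 \<and> n = M * r ^ 2))"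

definition I_set :: "int \<Rightarrow> int \<Rightarrow> int set" where
  "I_set s B = {t::int. 1 \<le> t \<and> t \<le> B \<and> t ^ 2 - 4 * s > 0}"

definition N_count :: "int \<Rightarrow> int \<Rightarrow> nat" where
  "N_count s B = card ((\<lambda>t. sqfree_part (t ^ 2 - 4 * s)) ` I_set s B)"

definition Delta :: "int \<Rightarrow> int \<Rightarrow> int" where
  "Delta s B = int (card (I_set s B)) - int (N_count s B)"

end

theory Submission
  imports Defs "HOL-Real_Asymp.Real_Asymp"
begin


lemma sqfree_mult:
  fixes M r :: int
  assumes "squarefree M" "r \<noteq> 0" "prime p"
  shows "multiplicity p M = multiplicity p (M * r^2) mod 2"
proof -
  have M0: "M \<noteq> 0" using assms(1) by auto
  have pe: "prime_elem p" using assms(3) by (rule prime_imp_prime_elem)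
  have "multiplicity p (M * r^2) = multiplicity p M + multiplicity p (r^2)"
    by (rule prime_elem_multiplicity_mult_distrib) (use pe M0 assms(2) in auto)
  also have "multiplicity p (r^2) = 2 * multiplicity p r"
    by (rule prime_elem_multiplicity_power_distrib) (use pe assms(2) in auto)
  finally have "multiplicity p (M * r^2) = multiplicity p M + 2 * multiplicity p r" .
  moreover have "multiplicity p M \<le> 1" using assms M0 squarefree_factorial_semiring'' by blast
  ultimately show ?thesis by auto
qed

lemma sqfree_ex1:
  fixes n :: int assumes "n > 0"
  shows "\<exists>!M. squarefree M \<and> (\<exists>r::int. r \<ge> 1 \<and> n = M * r ^ 2)"
proof (rule ex1I)
  have sq0: "square_part n \<noteq> 0" using assms by simp
  have "square_part n \<ge> 0" using normalize_square_part[of n] by (metis abs_ge_zero normalize_int_def)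
  hence "square_part n \<ge> 1" using sq0 by linarith
  then show "squarefree (squarefree_part n) \<and> (\<exists>r::int. r \<ge> 1 \<and> n = squarefree_part n * r ^ 2)"
    using squarefree_decompose[of n] by auto
next
  fix M assume "squarefree M \<and> (\<exists>r::int. r \<ge> 1 \<and> n = M * r ^ 2)"
  then obtain r where M: "squarefree M" "r \<ge> 1" "n = M * r^2" by auto
  have sq0: "square_part n \<noteq> 0" using assms by simp
  have Mpos: "M > 0" using M assms by (smt (verit) mult_nonpos_nonneg zero_le_power2)
  have spos: "squarefree_part n > 0"
  proof -
    have "square_part n \<ge> 0" using normalize_square_part[of n] by (metis abs_ge_zero normalize_int_def)
    thus ?thesis using squarefree_decompose[of n] assms sq0
      by (smt (verit) mult_nonpos_nonneg zero_le_power2)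
  qed
  have "normalize M = normalize (squarefree_part n)"
  proof (rule multiplicity_eq_imp_eq)
    fix p :: int assume p: "prime p"
    have "multiplicity p M = multiplicity p n mod 2" using sqfree_mult[OF M(1) _ p, of r] M by simp
    also have "\<dots> = multiplicity p (squarefree_part n)"
      using sqfree_mult[OF squarefree_squarefree_part[of n] sq0 p] squarefree_decompose[of n] by simp
    finally show "multiplicity p M = multiplicity p (squarefree_part n)" .
  qed (use Mpos spos in auto)
  thus "M = squarefree_part n" using Mpos spos by simp
qed

lemma sqfree_part_eq:
  fixes n M r :: int
  assumes "n > 0" "squarefree M" "r \<ge> 1" "n = M * r^2"
  shows "sqfree_part n = M"
  unfolding sqfree_part_def
  by (rule the1_equality[OF sqfree_ex1[OF assms(1)]]) (use assms in auto)

lemma sqfree_part_prop: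
  fixes n :: int
  assumes "n > 0"
  shows "squarefree (sqfree_part n) \<and> (\<exists>r::int. r \<ge> 1 \<and> n = sqfree_part n * r ^ 2)"
  unfolding sqfree_part_def using theI'[OF sqfree_ex1[OF assms]] .

lemma sqfree_part_mult_sq:
  fixes n u :: int
  assumes "n > 0" "u \<noteq> 0"
  shows "sqfree_part (n * u^2) = sqfree_part n"
proof -
  obtain r where r: "r \<ge> 1" "n = sqfree_part n * r^2" "squarefree (sqfree_part n)"
    using sqfree_part_prop[OF assms(1)] by auto
  have "n * u^2 = sqfree_part n * (r * \<bar>u\<bar>)^2" using r by (simp add: power_mult_distrib)
  moreover have "r * \<bar>u\<bar> \<ge> 1"
  proof -
    have "\<bar>u\<bar> \<ge> 1" using assms(2) by linarith
    hence "r * \<bar>u\<bar> \<ge> 1 * 1" using r(1) by (intro mult_mono) auto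
    thus ?thesis by simp
  qed
  moreover have "n * u^2 > 0" using assms by simp
  ultimately show ?thesis using sqfree_part_eq[of "n*u^2" "sqfree_part n" "r*\<bar>u\<bar>"] r by simp
qed



definition Ue :: "int \<Rightarrow> int \<Rightarrow> real set" where
  "Ue M e = {x. \<exists>a b::int. x = (a + b * sqrt M) / 2 \<and> a^2 - M * b^2 = 4 * e}"

lemma par_rep:
  fixes a b M e :: int
  assumes "a^2 - M * b^2 = 4 * e"
  shows "\<exists>p. a = M * b + 2 * p"
proof -
  have e1: "even (a*(a-1))" "even (b*(b-1))" by simp_all
  have "a - M*b = (a^2 - M*b^2) - a*(a-1) + M*(b*(b-1))"
    by (simp add: power2_eq_square algebra_simps)
  also have "even \<dots>" using assms e1 by simp
  finally have "even (a - M*b)" .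
  then obtain p where "a - M*b = 2*p" by blast
  thus ?thesis by (intro exI[of _ p]) simp
qed

lemma U_mult:
  assumes Mpos: "M > 0" and "x \<in> Ue M e" "y \<in> Ue M f"
  shows "x * y \<in> Ue M (e * f)"
proof -
  obtain a b where ab: "x = (a + b * sqrt M) / 2" "a^2 - M * b^2 = 4 * e" using assms(2) by (auto simp: Ue_def)
  obtain c d where cd: "y = (c + d * sqrt M) / 2" "c^2 - M * d^2 = 4 * f" using assms(3) by (auto simp: Ue_def)
  obtain p where p: "a = M * b + 2 * p" using par_rep[OF ab(2)] by blast
  obtain q where q: "c = M * d + 2 * q" using par_rep[OF cd(2)] by blast
  have ev: "even (M * (M+1))" by simp
  then obtain w where w: "M * (M+1) = 2 * w" by blast
  have "a*c + M*b*d = M*(M+1)*b*d + 2*(M*b*q + p*M*d + 2*p*q)" unfolding p q by (simp add: algebra_simps)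
  hence A: "a*c + M*b*d = 2 * (w*b*d + M*b*q + p*M*d + 2*p*q)" unfolding w by (simp add: algebra_simps)
  have "a*d + b*c = 2 * (M*b*d + p*d + b*q)" unfolding p q by (simp add: algebra_simps)
  define A' where "A' = w*b*d + M*b*q + p*M*d + 2*p*q"
  define B' where "B' = M*b*d + p*d + b*q"
  have A2: "a*c + M*b*d = 2*A'" using A A'_def by simp
  have B2: "a*d + b*c = 2*B'" using \<open>a*d + b*c = _\<close> B'_def by simp
  have "(a*c + M*b*d)^2 - M*(a*d+b*c)^2 = (a^2 - M*b^2) * (c^2 - M*d^2)"
    by (simp add: power2_eq_square algebra_simps)
  hence "4*(A'^2 - M*B'^2) = 16 * e * f" unfolding A2 B2 ab(2) cd(2) by (simp add: power2_eq_square algebra_simps)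
  hence N: "A'^2 - M*B'^2 = 4*(e*f)" by simp
  have sM: "sqrt M * sqrt M = M" using Mpos by simp
  have "x * y = ((a*c + M*b*d) + (a*d+b*c) * sqrt M) / 4"
    unfolding ab(1) cd(1) using sM by (simp add: field_simps)
  also have "\<dots> = (A' + B' * sqrt M) / 2"
    using arg_cong[OF A2, of real_of_int] arg_cong[OF B2, of real_of_int] by simp
  finally show ?thesis using N unfolding Ue_def by blast
qed

lemma U_one: "1 \<in> Ue M 1"
  unfolding Ue_def by (rule CollectI, rule exI[of _ 2], rule exI[of _ 0]) simp

lemma U_inv:
  assumes "M > 0" "x \<in> Ue M e" "e \<in> {1,-1}"
  shows "inverse x \<in> Ue M e \<and> x \<noteq> 0 \<and> (\<exists>a::int. x + e / x = a)"
proof -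
  obtain a b where ab: "x = (a + b * sqrt M) / 2" "a^2 - M * b^2 = 4 * e" using assms(2) by (auto simp: Ue_def)
  have sM: "sqrt M * sqrt M = M" using assms(1) by simp
  have e2: "real_of_int e * e = 1" using assms(3) by auto
  have prod: "x * ((a - b * sqrt M) / 2) = e"
  proof -
    have "x * ((a - b * sqrt M) / 2) = (a^2 - (b^2) * (sqrt M * sqrt M)) / 4"
      unfolding ab(1) by (simp add: field_simps power2_eq_square)
    also have "\<dots> = (of_int (a^2 - M * b^2)) / 4" using sM by simp
    also have "\<dots> = e" using ab(2) by simp
    finally show ?thesis .
  qed
  have x0: "x \<noteq> 0" using prod assms(3) by auto
  have ex: "e / x = (a - b * sqrt M) / 2"
  proof -
    have "e / x = (x * ((a - b * sqrt M) / 2)) / x" using prod by simp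
    also have "\<dots> = ((a - b * sqrt M) / 2)" using x0 by simp
    finally show ?thesis .
  qed
  have inv: "inverse x = (e*a + (-e*b) * sqrt M) / 2"
  proof -
    have "inverse x = e * (e / x)" using e2 x0 by (simp add: field_simps)
    also have "\<dots> = (e*a + (-e*b) * sqrt M) / 2" unfolding ex by (simp add: field_simps)
    finally show ?thesis .
  qed
  have "(e*a)^2 - M*(-e*b)^2 = (e*e) * (a^2 - M*b^2)" by (simp add: power2_eq_square algebra_simps)
  also have "\<dots> = 4 * e" using ab(2) assms(3) by auto
  finally have "inverse x \<in> Ue M e" unfolding Ue_def using inv by blast
  moreover have "x + e / x = a"
  proof -
    have "x + e / x = x + (a - b * sqrt M) / 2" using ex by simp
    also have "\<dots> = a" unfolding ab(1) by (simp add: field_simps)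
    finally show ?thesis .
  qed
  ultimately show ?thesis using x0 by blast
qed

lemma U_pow:
  assumes "M > 0" "x \<in> Ue M e"
  shows "x ^ k \<in> Ue M (e ^ k)"
proof (induction k)
  case 0 thus ?case using U_one by simp
next
  case (Suc k)
  have "x * x^k \<in> Ue M (e * e^k)" by (rule U_mult[OF assms Suc])
  thus ?case by simp
qed

lemma sqrt2_bound: "sqrt 2 \<ge> (7/5::real)"
  by (rule real_le_rsqrt) (simp add: power2_eq_square)

lemma U_big:
  assumes "M \<ge> 2" "x \<in> Ue M e" "e \<in> {1,-1}" "x > 1"
  shows "\<exists>(a::int) (b::int). x = (a + b * sqrt M) / 2 \<and> 1 \<le> a \<and> 1 \<le> b \<and> a \<le> x + 1 \<and> b \<le> x + 1"
    and "x \<ge> 6/5"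
proof -
  obtain a b where ab: "x = (a + b * sqrt M) / 2" "a^2 - M * b^2 = 4 * e" using assms(2) by (auto simp: Ue_def)
  from U_inv[of M x e] assms have "\<exists>a'::int. x + e / x = a'" by auto
  have sM: "sqrt M * sqrt M = M" using assms(1) by simp
  have xa: "x + e / x = a" and xb: "x - e / x = b * sqrt M"
  proof -
    have prod: "x * ((a - b * sqrt M) / 2) = e"
    proof -
      have "x * ((a - b * sqrt M) / 2) = (a^2 - (b^2) * (sqrt M * sqrt M)) / 4"
        unfolding ab(1) by (simp add: field_simps power2_eq_square)
      also have "\<dots> = (of_int (a^2 - M * b^2)) / 4" using sM by simp
      also have "\<dots> = e" using ab(2) by simp
      finally show ?thesis .
    qed
    hence "e / x = (a - b * sqrt M) / 2" using assms(4) by (simp add: field_simps)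
    thus "x + e / x = a" "x - e / x = b * sqrt M" unfolding ab(1) by (simp_all add: field_simps)
  qed
  have ex: "\<bar>e / x\<bar> < 1" using assms(3,4) by auto
  have a1: "1 \<le> a" using xa ex assms(4) by linarith
  have sM1: "sqrt M \<ge> sqrt 2" using assms(1) by simp
  have bpos: "b * sqrt M > 0" using xb ex assms(4) by linarith
  have sMp: "sqrt M > 0" using assms(1) by simp
  have "real_of_int b > 0" using bpos sMp by (simp add: zero_less_mult_iff)
  hence b1: "1 \<le> b" by simp
  have sMg1: "sqrt M \<ge> 1" using assms(1) by simp
  have "real_of_int b * 1 \<le> real_of_int b * sqrt M" using b1 sMg1 by (intro mult_left_mono) auto
  hence "b \<le> b * sqrt M" by simp
  hence bx: "b \<le> x + 1" using xb ex by linarith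
  have ax: "a \<le> x + 1" using xa ex by linarith
  show "\<exists>(a::int) (b::int). x = (a + b * sqrt M) / 2 \<and> 1 \<le> a \<and> 1 \<le> b \<and> a \<le> x + 1 \<and> b \<le> x + 1"
  proof -
    have "1 \<le> real_of_int a" "1 \<le> real_of_int b" using a1 b1 by simp_all
    thus ?thesis using ab(1) ax bx by blast
  qed
  have s75: "sqrt M \<ge> 7/5" using sM1 sqrt2_bound by linarith
  have "1 * (7/5) \<le> b * sqrt M" using b1 s75 by (intro mult_mono) auto
  hence "b * sqrt M \<ge> 7/5" by simp
  thus "x \<ge> 6/5" using ab(1) a1 by simp
qed

lemma not_both:
  assumes "M > 0" "x > 1" "x \<in> Ue M 1" "x \<in> Ue M (-1)"
  shows False
proof -
  obtain a :: int where a: "x + 1 / x = a" using U_inv[OF assms(1,3)] by auto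
  obtain c :: int where c: "x + (-1) / x = c" using U_inv[OF assms(1,4)] by auto
  have "2 / x = a - c" using a c by (simp add: field_simps)
  moreover have "0 < 2 / x" "2 / x < 2" using assms(2) by (auto simp: field_simps)
  ultimately have "real_of_int (a - c) > 0" "real_of_int (a - c) < 2" by simp_all
  hence "a - c > 0" "a - c < 2" by linarith+
  hence "a - c = 1" by linarith
  hence "x = 2" using \<open>2 / x = a - c\<close> assms(2) by (simp add: field_simps)
  hence "5/2 = (of_int a :: real)" using a by simp
  hence "5 = 2 * a" by linarith
  thus False by presburger
qed

definition U :: "int \<Rightarrow> real set" where "U M = Ue M 1 \<union> Ue M (-1)"

lemma U_mult': "M > 0 \<Longrightarrow> x \<in> U M \<Longrightarrow> y \<in> U M \<Longrightarrow> x * y \<in> U M"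
  unfolding U_def using U_mult[of M x _ y] by fastforce

lemma U_inv': "M > 0 \<Longrightarrow> x \<in> U M \<Longrightarrow> inverse x \<in> U M"
  unfolding U_def using U_inv[of M x] by auto

lemma U_finite:
  assumes "M \<ge> 2"
  shows "finite {y \<in> U M. 1 < y \<and> y \<le> c}"
proof -
  let ?S = "(\<lambda>(a::int,b::int). (a + b * sqrt M) / 2) ` ({1..\<lfloor>c\<rfloor>+1} \<times> {1..\<lfloor>c\<rfloor>+1})"
  have "{y \<in> U M. 1 < y \<and> y \<le> c} \<subseteq> ?S"
  proof
    fix y assume y: "y \<in> {y \<in> U M. 1 < y \<and> y \<le> c}"
    then obtain e where e: "y \<in> Ue M e" "e \<in> {1,-1}" unfolding U_def by auto
    obtain a b :: int where ab: "y = (a + b * sqrt M) / 2" "1 \<le> a" "1 \<le> b" "a \<le> y + 1" "b \<le> y + 1"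
      using U_big(1)[OF assms e] y by auto
    have "a - 1 \<le> \<lfloor>c\<rfloor>" "b - 1 \<le> \<lfloor>c\<rfloor>" using ab y by (simp_all add: le_floor_iff)
    hence "a \<le> \<lfloor>c\<rfloor> + 1" "b \<le> \<lfloor>c\<rfloor> + 1" by linarith+
    thus "y \<in> ?S" using ab by force
  qed
  thus ?thesis by (rule finite_subset) simp
qed

lemma fund:
  assumes "M \<ge> 2" "x \<in> U M" "x > 1"
  shows "\<exists>\<epsilon>\<in>U M. \<epsilon> > 1 \<and> (\<forall>y\<in>U M. y > 1 \<longrightarrow> \<epsilon> \<le> y)"
proof -
  let ?S = "{y \<in> U M. 1 < y \<and> y \<le> x}"
  have fin: "finite ?S" by (rule U_finite[OF assms(1)])
  have ne: "x \<in> ?S" using assms by auto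
  define \<epsilon> where "\<epsilon> = Min ?S"
  have "\<epsilon> \<in> ?S" unfolding \<epsilon>_def using fin ne by (intro Min_in) auto
  moreover have "\<forall>y\<in>U M. y > 1 \<longrightarrow> \<epsilon> \<le> y"
  proof (intro ballI impI)
    fix y assume "y \<in> U M" "y > 1"
    show "\<epsilon> \<le> y"
    proof (cases "y \<le> x")
      case True thus ?thesis unfolding \<epsilon>_def using fin \<open>y \<in> U M\<close> \<open>y > 1\<close> by (intro Min_le) auto
    next
      case False thus ?thesis using \<open>\<epsilon> \<in> ?S\<close> by auto
    qed
  qed
  ultimately show ?thesis by auto
qed

lemma powers:
  assumes "M \<ge> 2" "\<epsilon> \<in> U M" "\<epsilon> > 1" "\<forall>y\<in>U M. y > 1 \<longrightarrow> \<epsilon> \<le> y"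
      and "y \<in> U M" "y > 1"
  shows "\<exists>k\<ge>1. y = \<epsilon> ^ k"
proof -
  have M0: "M > 0" using assms(1) by simp
  have main: "\<forall>y\<in>U M. 1 < y \<and> y < \<epsilon> ^ n \<longrightarrow> (\<exists>k\<ge>1. y = \<epsilon> ^ k)" for n
  proof (induction n)
    case 0 thus ?case by auto
  next
    case (Suc n)
    show ?case
    proof (intro ballI impI)
      fix y assume y: "y \<in> U M" "1 < y \<and> y < \<epsilon> ^ Suc n"
      define z where "z = y * inverse \<epsilon>"
      have zU: "z \<in> U M" unfolding z_def by (intro U_mult'[OF M0 y(1)] U_inv'[OF M0 assms(2)])
      have zlt: "z < \<epsilon> ^ n" using y assms(3) unfolding z_def by (simp add: field_simps)
      have "\<epsilon> \<le> y" using assms(4) y by auto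
      hence "z \<ge> 1" unfolding z_def using assms(3) by (simp add: field_simps)
      show "\<exists>k\<ge>1. y = \<epsilon> ^ k"
      proof (cases "z = 1")
        case True
        hence "y = \<epsilon>" unfolding z_def using assms(3) by (simp add: field_simps)
        thus ?thesis by (intro exI[of _ 1]) simp
      next
        case False
        hence "z > 1" using \<open>z \<ge> 1\<close> by simp
        then obtain k where k: "k \<ge> 1" "z = \<epsilon> ^ k" using Suc.IH zU zlt by blast
        have "y = \<epsilon> ^ Suc k" using k(2) assms(3) unfolding z_def by (simp add: field_simps)
        thus ?thesis by (intro exI[of _ "Suc k"]) simp
      qed
    qed
  qed
  obtain n where "y < \<epsilon> ^ n" using real_arch_pow[OF assms(3)] by blast
  thus ?thesis using main assms(5,6) by blast
qed

fun Q :: "int \<Rightarrow> int \<Rightarrow> nat \<Rightarrow> int" where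
  "Q e u 0 = 2"
| "Q e u (Suc 0) = u"
| "Q e u (Suc (Suc n)) = u * Q e u (Suc n) - e * Q e u n"

lemma Q_eq2:
  fixes y :: real
  assumes "y \<noteq> 0" "y + e / y = u"
  shows "y ^ n + (e / y) ^ n = Q e u n \<and> y ^ Suc n + (e / y) ^ Suc n = Q e u (Suc n)"
proof (induction n)
  case 0 thus ?case using assms by simp
next
  case (Suc n)
  define w where "w = e / y"
  have yw: "y * w = e" unfolding w_def using assms(1) by simp
  have "y ^ Suc (Suc n) + w ^ Suc (Suc n) = (y + w) * (y ^ Suc n + w ^ Suc n) - (y*w) * (y^n + w^n)"
    by (simp add: algebra_simps)
  also have "\<dots> = u * Q e u (Suc n) - e * Q e u n" using Suc.IH assms(2) yw unfolding w_def by simp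
  finally show ?case using Suc.IH unfolding w_def by simp
qed

lemma Q_eq:
  fixes y :: real
  assumes "y \<noteq> 0" "y + e / y = u"
  shows "y ^ n + (e / y) ^ n = Q e u n"
  using Q_eq2[OF assms] by blast

lemma rep_trace:
  fixes a b M e :: int
  assumes "M > 0" "a^2 - M * b^2 = 4 * e" "x = (a + b * sqrt M) / 2" "e \<in> {1,-1}"
  shows "x + e / x = a" "x \<in> Ue M e"
proof -
  have sM: "sqrt M * sqrt M = M" using assms(1) by simp
  have prod: "x * ((a - b * sqrt M) / 2) = e"
  proof -
    have "x * ((a - b * sqrt M) / 2) = (a^2 - (b^2) * (sqrt M * sqrt M)) / 4"
      unfolding assms(3) by (simp add: field_simps power2_eq_square)
    also have "\<dots> = (of_int (a^2 - M * b^2)) / 4" using sM by simp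
    also have "\<dots> = e" using assms(2) by simp
    finally show ?thesis .
  qed
  have x0: "x \<noteq> 0" using prod assms(4) by auto
  have "e / x = (x * ((a - b * sqrt M) / 2)) / x" using prod by simp
  also have "\<dots> = ((a - b * sqrt M) / 2)" using x0 by simp
  finally have "e / x = (a - b * sqrt M) / 2" .
  thus "x + e / x = a" unfolding assms(3) by (simp add: field_simps)
  show "x \<in> Ue M e" unfolding Ue_def using assms(2,3) by blast
qed

lemma mono_tr:
  fixes x y :: real
  assumes "1 \<le> x" "x \<le> y" "e \<in> {1,-1}"
  shows "x + e / x \<le> y + e / y"
proof (cases "e = 1")
  case True
  have "(y - x) * (1 - 1 / (x*y)) \<ge> 0"
  proof (rule mult_nonneg_nonneg)
    have "1 * 1 \<le> x * y" using assms by (intro mult_mono) auto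
    hence "x * y \<ge> 1" by simp
    thus "0 \<le> 1 - 1 / (x * y)" by simp
  qed (use assms in simp)
  moreover have "(y - x) * (1 - 1 / (x*y)) = (y + 1/y) - (x + 1/x)" using assms by (simp add: field_simps)
  ultimately show ?thesis using True by simp
next
  case False
  hence e: "e = -1" using assms by auto
  have "1 / y \<le> 1 / x" using assms by (simp add: divide_left_mono)
  thus ?thesis using e assms by simp
qed

lemma xgt1:
  fixes t r M :: int
  assumes "M \<ge> 2" "t \<ge> 1" "r \<ge> 1"
  shows "(t + r * sqrt M) / 2 > (1::real)"
proof -
  have "sqrt M \<ge> sqrt 2" using assms by simp
  hence "sqrt M \<ge> 7/5" using sqrt2_bound by linarith
  moreover have "real_of_int r \<ge> 1" using assms by simp
  ultimately have "1 * (7/5) \<le> r * sqrt M" by (intro mult_mono) auto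
  hence "r * sqrt M \<ge> 7/5" by simp
  thus ?thesis using assms(2) by simp
qed

lemma pow_pm1: "e \<in> {1,-1::int} \<Longrightarrow> e^k \<in> {1,-1}"
  by (cases "even k") (auto simp: minus_one_power_iff)

lemma unit_powers:
  assumes "M \<ge> 2" "x \<in> Ue M s" "x0 \<in> Ue M s" "s \<in> {1,-1}" "x > 1" "x0 > 1"
  shows "\<exists>\<epsilon> e k j. \<epsilon> \<in> Ue M e \<and> e \<in> {1,-1} \<and> \<epsilon> > 1 \<and> k \<ge> 1 \<and> j \<ge> 1 \<and>
            x = \<epsilon> ^ k \<and> x0 = \<epsilon> ^ j \<and> e ^ k = s \<and> e ^ j = s"
proof -
  have M0: "M > 0" using assms(1) by simp
  have xU: "x \<in> U M" "x0 \<in> U M" using assms(2,3,4) unfolding U_def by auto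
  obtain \<epsilon> where eps: "\<epsilon> \<in> U M" "\<epsilon> > 1" "\<forall>y\<in>U M. y > 1 \<longrightarrow> \<epsilon> \<le> y"
    using fund[OF assms(1) xU(1) assms(5)] by blast
  obtain k where k: "k \<ge> 1" "x = \<epsilon> ^ k" using powers[OF assms(1) eps xU(1) assms(5)] by blast
  obtain j where j: "j \<ge> 1" "x0 = \<epsilon> ^ j" using powers[OF assms(1) eps xU(2) assms(6)] by blast
  obtain e where e: "\<epsilon> \<in> Ue M e" "e \<in> {1,-1}" using eps(1) unfolding U_def by auto
  have ek: "e ^ k = s"
  proof (rule ccontr)
    assume ne: "e ^ k \<noteq> s"
    have "x \<in> Ue M (e ^ k)" using U_pow[OF M0 e(1)] k by simp
    moreover have "e ^ k \<in> {1,-1}" using e(2) by (rule pow_pm1)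
    ultimately have "x \<in> Ue M 1" "x \<in> Ue M (-1)" using assms(2,4) ne by auto
    thus False using not_both[OF M0 assms(5)] by blast
  qed
  have ej: "e ^ j = s"
  proof (rule ccontr)
    assume ne: "e ^ j \<noteq> s"
    have "x0 \<in> Ue M (e ^ j)" using U_pow[OF M0 e(1)] j by simp
    moreover have "e ^ j \<in> {1,-1}" using e(2) by (rule pow_pm1)
    ultimately have "x0 \<in> Ue M 1" "x0 \<in> Ue M (-1)" using assms(3,4) ne by auto
    thus False using not_both[OF M0 assms(6)] by blast
  qed
  show ?thesis using e eps(2) k j ek ej by blast
qed

lemma struct_p:
  fixes M t t0 r r0 :: int
  assumes "M \<ge> 2" "1 \<le> t0" "t0 < t" "r0 \<ge> 1" "r \<ge> 1"
    "t0^2 - M*r0^2 = 4" "t^2 - M*r^2 = 4"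
  shows "\<exists>(u::int) (m::nat). m \<ge> 2 \<and> t = Q 1 u m \<and> u \<ge> 1 \<and>
           (real_of_int (u-1))^m \<le> t \<and> (6/5::real)^m \<le> t"
proof -
  have M0: "M > 0" using assms(1) by simp
  define x where "x = (t + r * sqrt M) / 2"
  define x0 where "x0 = (t0 + r0 * sqrt M) / 2"
  have s1: "(1::int) \<in> {1,-1}" by simp
  have xtr: "x + 1 / x = t" "x \<in> Ue M 1" using rep_trace[OF M0 _ x_def s1] assms(7) by auto
  have x0tr: "x0 + 1 / x0 = t0" "x0 \<in> Ue M 1" using rep_trace[OF M0 _ x0_def s1] assms(6) by auto
  have x1: "x > 1" unfolding x_def using xgt1[OF assms(1) _ assms(5)] assms(2,3) by simp
  have x01: "x0 > 1" unfolding x0_def using xgt1[OF assms(1) assms(2) assms(4)] by simp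
  obtain \<epsilon> e k j where E: "\<epsilon> \<in> Ue M e" "e \<in> {1,-1}" "\<epsilon> > 1" "k \<ge> 1" "j \<ge> 1"
     "x = \<epsilon> ^ k" "x0 = \<epsilon> ^ j" "e ^ k = 1" "e ^ j = 1"
    using unit_powers[OF assms(1) xtr(2) x0tr(2) s1 x1 x01] by blast
  obtain \<delta> m m0 where D: "\<delta> \<in> Ue M 1" "\<delta> > 1" "m \<ge> 1" "m0 \<ge> 1" "x = \<delta> ^ m" "x0 = \<delta> ^ m0"
  proof (cases "e = 1")
    case True thus ?thesis using that[of \<epsilon> k j] E by simp
  next
    case False
    hence em: "e = -1" using E(2) by auto
    hence "even k" "even j" using E(8,9) by (auto simp: minus_one_power_iff split: if_splits)
    then obtain k' j' where kj: "k = 2 * k'" "j = 2 * j'" by (auto elim!: evenE)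
    have "\<epsilon>^2 \<in> Ue M ((-1)^2)" using U_pow[OF M0 E(1)] em by blast
    moreover have "\<epsilon>^2 > 1" using E(3) by (simp add: one_less_power)
    moreover have "x = (\<epsilon>^2)^k'" "x0 = (\<epsilon>^2)^j'" using E(6,7) kj by (simp_all add: power_mult)
    moreover have "k' \<ge> 1" "j' \<ge> 1" using E(4,5) kj by auto
    ultimately show ?thesis using that[of "\<epsilon>^2" k' j'] by simp
  qed
  have "x0 < x"
  proof (rule ccontr)
    assume "\<not> x0 < x"
    hence "x + 1/x \<le> x0 + 1/x0" using mono_tr[of x x0 1] x1 by simp
    thus False using xtr(1) x0tr(1) assms(3) by simp
  qed
  hence "m0 < m" using D(5,6) D(2) by (intro power_less_imp_less_exp[OF D(2)]) simp
  hence m2: "m \<ge> 2" using D(4) by simp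
  obtain u :: int where u: "\<delta> + 1 / \<delta> = u" using U_inv[OF M0 D(1)] by auto
  have d0: "\<delta> \<noteq> 0" using D(2) by simp
  have "real_of_int t = \<delta>^m + (1/\<delta>)^m" using xtr(1) D(5) by (simp add: power_one_over)
  also have "\<dots> = Q 1 u m" using Q_eq[of \<delta> 1 u m] d0 u by simp
  finally have tQ: "t = Q 1 u m" by linarith
  have id: "1 / \<delta> < 1" "1/\<delta> > 0" using D(2) by auto
  have u1: "u \<ge> 1" using u id D(2) by linarith
  have "real_of_int (u-1) \<le> \<delta>" using u id by linarith
  hence "(real_of_int (u-1))^m \<le> \<delta>^m" using u1 by (intro power_mono) auto
  moreover have "\<delta>^m \<le> t"
  proof -
    have p: "1 / \<delta>^m > 0" using D(2) by simp
    have "\<delta>^m + 1 / \<delta>^m = t" using xtr(1) D(5) by simp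
    thus ?thesis using p by linarith
  qed
  moreover have "(6/5::real)^m \<le> \<delta>^m"
    using U_big(2)[OF assms(1) D(1) _ D(2)] by (intro power_mono) auto
  ultimately show ?thesis using tQ m2 u1 by (intro exI[of _ u] exI[of _ m]) auto
qed

lemma struct_n:
  fixes M t t0 r r0 :: int
  assumes "M \<ge> 2" "1 \<le> t0" "t0 < t" "r0 \<ge> 1" "r \<ge> 1"
    "t0^2 - M*r0^2 = -4" "t^2 - M*r^2 = -4"
  shows "\<exists>(u::int) (k::nat). u \<ge> 1 \<and> t = Q (-1) u k \<and>
           (k = 3 \<or> (k \<ge> 5 \<and> (real_of_int u)^k \<le> t + 1 \<and> (6/5::real)^k \<le> t + 1))"
proof -
  have M0: "M > 0" using assms(1) by simp
  define x where "x = (t + r * sqrt M) / 2"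
  define x0 where "x0 = (t0 + r0 * sqrt M) / 2"
  have s1: "(-1::int) \<in> {1,-1}" by simp
  have xtr: "x + (-1) / x = t" "x \<in> Ue M (-1)" using rep_trace[OF M0 _ x_def s1] assms(7) by auto
  have x0tr: "x0 + (-1) / x0 = t0" "x0 \<in> Ue M (-1)" using rep_trace[OF M0 _ x0_def s1] assms(6) by auto
  have x1: "x > 1" unfolding x_def using xgt1[OF assms(1) _ assms(5)] assms(2,3) by simp
  have x01: "x0 > 1" unfolding x0_def using xgt1[OF assms(1) assms(2) assms(4)] by simp
  obtain \<epsilon> e k j where E: "\<epsilon> \<in> Ue M e" "e \<in> {1,-1}" "\<epsilon> > 1" "k \<ge> 1" "j \<ge> 1"
     "x = \<epsilon> ^ k" "x0 = \<epsilon> ^ j" "e ^ k = -1" "e ^ j = -1"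
    using unit_powers[OF assms(1) xtr(2) x0tr(2) s1 x1 x01] by blast
  have em: "e = -1" using E(2,8) by auto
  hence ok: "odd k" "odd j" using E(8,9) by (auto simp: minus_one_power_iff split: if_splits)
  have "x0 < x"
  proof (rule ccontr)
    assume "\<not> x0 < x"
    hence "x + (-1)/x \<le> x0 + (-1)/x0" using mono_tr[of x x0 "-1"] x1 by simp
    thus False using xtr(1) x0tr(1) assms(3) by simp
  qed
  hence "j < k" using E(6,7) by (intro power_less_imp_less_exp[OF E(3)]) simp
  hence k3: "k = 3 \<or> k \<ge> 5" using ok E(5) by presburger
  obtain u :: int where u: "\<epsilon> + (-1) / \<epsilon> = u" using U_inv[OF M0 E(1)] E(2) em by auto
  have d0: "\<epsilon> \<noteq> 0" using E(3) by simp
  have "(-1 / \<epsilon>)^k = - (1 / \<epsilon>^k)" using ok by (simp add: power_one_over)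
  hence "real_of_int t = \<epsilon>^k + (-1/\<epsilon>)^k" using xtr(1) E(6) by simp
  also have "\<dots> = Q (-1) u k" using Q_eq[of \<epsilon> "-1" u k] d0 u by simp
  finally have tQ: "t = Q (-1) u k" by linarith
  have id: "1 / \<epsilon> < 1" "1/\<epsilon> > 0" using E(3) by auto
  have u1: "u \<ge> 1" using u id E(3) by linarith
  have "real_of_int u \<le> \<epsilon>" using u id by linarith
  hence "(real_of_int u)^k \<le> \<epsilon>^k" using u1 by (intro power_mono) auto
  moreover have "\<epsilon>^k \<le> t + 1"
  proof -
    have p: "1 / \<epsilon>^k < 1" using E(3,4) by (simp add: one_less_power)
    have "\<epsilon>^k - 1 / \<epsilon>^k = t" using xtr(1) E(6) by simp
    thus ?thesis using p by linarith
  qed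
  moreover have "(6/5::real)^k \<le> \<epsilon>^k"
    using U_big(2)[OF assms(1) E(1) E(2) E(3)] by (intro power_mono) auto
  ultimately show ?thesis using tQ k3 u1 by (intro exI[of _ u] exI[of _ k]) auto
qed



lemma powr_k:
  fixes x :: real
  assumes "x > 0" "k > 0"
  shows "(x powr (1 / real k)) ^ k = x"
proof -
  have "(x powr (1 / real k)) ^ k = (x powr (1 / real k)) powr (real k)"
    using assms by (simp add: powr_realpow)
  also have "\<dots> = x powr (1 / real k * real k)" by (simp add: powr_powr)
  also have "\<dots> = x" using assms by simp
  finally show ?thesis .
qed

lemma root_bound:
  fixes v :: int and x :: real
  assumes "x \<ge> 1" "k \<ge> 1" "m \<ge> k" "v \<ge> 0" "(real_of_int v)^m \<le> x"
  shows "v \<le> \<lfloor>x powr (1 / real k)\<rfloor>"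
proof (rule ccontr)
  let ?c = "x powr (1 / real k)"
  assume "\<not> v \<le> \<lfloor>?c\<rfloor>"
  hence vc: "real_of_int v > ?c" by (simp add: floor_less_iff not_le)
  have c1: "?c \<ge> 1" using assms by (simp add: ge_one_powr_ge_zero)
  have "?c ^ k < (real_of_int v) ^ k" using vc c1 by (intro power_strict_mono) (use assms in auto)
  hence "x < (real_of_int v)^k" using powr_k[of x k] assms by simp
  also have "\<dots> \<le> (real_of_int v)^m" using vc c1 assms by (intro power_increasing) auto
  finally show False using assms by simp
qed

lemma card_nonmin:
  fixes I :: "'a::linorder set" and f :: "'a \<Rightarrow> 'b"
  assumes "finite I"
  shows "card I = card (f ` I) + card {t\<in>I. \<exists>t'\<in>I. t' < t \<and> f t' = f t}"
proof -
  define Mn where "Mn = {t\<in>I. \<not>(\<exists>t'\<in>I. t' < t \<and> f t' = f t)}"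
  define NM where "NM = {t\<in>I. \<exists>t'\<in>I. t' < t \<and> f t' = f t}"
  have un: "I = Mn \<union> NM" "Mn \<inter> NM = {}" unfolding Mn_def NM_def by auto
  have "card I = card Mn + card NM" using assms un by (metis card_Un_disjoint finite_Un)
  moreover have "f ` Mn = f ` I"
  proof
    show "f ` Mn \<subseteq> f ` I" unfolding Mn_def by auto
    show "f ` I \<subseteq> f ` Mn"
    proof
      fix y assume "y \<in> f ` I"
      then obtain t where t: "t \<in> I" "f t = y" by auto
      define S where "S = {t'\<in>I. f t' = y}"
      have fS: "finite S" "S \<noteq> {}" unfolding S_def using assms t by auto
      define m where "m = Min S"
      have "m \<in> S" unfolding m_def using fS by simp
      moreover have "\<forall>t'\<in>S. m \<le> t'" unfolding m_def using fS by simp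
      ultimately have "m \<in> Mn" "f m = y" unfolding Mn_def S_def by (auto simp: not_less)
      thus "y \<in> f ` Mn" by blast
    qed
  qed
  moreover have "inj_on f Mn"
  proof (rule inj_onI)
    fix a b assume ab: "a \<in> Mn" "b \<in> Mn" "f a = f b"
    show "a = b"
    proof (rule ccontr)
      assume "a \<noteq> b"
      hence "a < b \<or> b < a" by auto
      thus False using ab unfolding Mn_def by auto
    qed
  qed
  ultimately have "card (f ` I) = card Mn" using card_image by metis
  thus ?thesis using \<open>card I = card Mn + card NM\<close> unfolding NM_def by simp
qed



definition NMs :: "int \<Rightarrow> int \<Rightarrow> int set" where
  "NMs s B = {t \<in> I_set s B. \<exists>t'\<in>I_set s B. t' < t \<and> sqfree_part (t'^2 - 4*s) = sqfree_part (t^2 - 4*s)}"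

lemma I_fin: "finite (I_set s B)"
  by (rule finite_subset[of _ "{1..B}"]) (auto simp: I_set_def)

lemma Delta_eq: "Delta s B = int (card (NMs s B))"
proof -
  have "card (I_set s B) = N_count s B + card (NMs s B)"
    unfolding N_count_def NMs_def by (rule card_nonmin[OF I_fin])
  thus ?thesis unfolding Delta_def by simp
qed

lemma no_square:
  fixes t r s :: int
  assumes "t \<ge> 1" "r \<ge> 1" "t^2 - r^2 = 4*s" "s \<in> {1,-1}"
  shows False
proof (cases "s = 1")
  case True
  have "t > r"
  proof (rule ccontr)
    assume "\<not> t > r"
    hence "t^2 \<le> r^2" using assms by (intro power_mono) auto
    thus False using assms True by linarith
  qed
  then obtain d where d: "t = r + d" "d \<ge> 1" by (metis add.commute diff_add_cancel zle_diff1_eq zless_imp_add1_zle add_le_cancel_left)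
  hence e4: "d * (2*r + d) = 4" using assms True by (simp add: power2_eq_square algebra_simps)
  have "d \<noteq> 1"
  proof
    assume "d = 1"
    hence "2*r + 1 = 4" using e4 by simp
    thus False by presburger
  qed
  hence "d \<ge> 2" using d by auto
  hence "d * (2*r + d) \<ge> 2 * 4" using assms by (intro mult_mono) auto
  thus False using e4 by simp
next
  case False
  hence s: "s = -1" using assms by auto
  have "r > t"
  proof (rule ccontr)
    assume "\<not> r > t"
    hence "r^2 \<le> t^2" using assms by (intro power_mono) auto
    thus False using assms s by linarith
  qed
  then obtain d where d: "r = t + d" "d \<ge> 1" by (metis add.commute diff_add_cancel zle_diff1_eq zless_imp_add1_zle add_le_cancel_left)
  hence e4: "d * (2*t + d) = 4" using assms s by (simp add: power2_eq_square algebra_simps)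
  have "d \<noteq> 1"
  proof
    assume "d = 1"
    hence "2*t + 1 = 4" using e4 by simp
    thus False by presburger
  qed
  hence "d \<ge> 2" using d by auto
  hence "d * (2*t + d) \<ge> 2 * 4" using assms by (intro mult_mono) auto
  thus False using e4 by simp
qed

lemma class_rep:
  fixes s t t' :: int
  assumes "s \<in> {1,-1}" "t \<in> I_set s B" "t' \<in> I_set s B"
     "sqfree_part (t'^2 - 4*s) = sqfree_part (t^2 - 4*s)"
  shows "\<exists>M r r'. M \<ge> 2 \<and> r \<ge> 1 \<and> r' \<ge> 1 \<and> t^2 - M*r^2 = 4*s \<and> t'^2 - M*r'^2 = 4*s"
proof -
  have p: "t^2 - 4*s > 0" "t'^2 - 4*s > 0" "t \<ge> 1" "t' \<ge> 1" using assms by (auto simp: I_set_def)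
  define M where "M = sqfree_part (t^2 - 4*s)"
  obtain r where r: "r \<ge> 1" "t^2 - 4*s = M * r^2" "squarefree M" using sqfree_part_prop[OF p(1)] M_def by auto
  obtain r' where r': "r' \<ge> 1" "t'^2 - 4*s = M * r'^2" using sqfree_part_prop[OF p(2)] M_def assms(4) by auto
  have "M * r^2 > 0" using r p by simp
  hence "M > 0" using r by (simp add: zero_less_mult_iff)
  moreover have "M \<noteq> 1"
  proof
    assume "M = 1"
    hence "t^2 - r^2 = 4*s" using r by simp
    thus False using no_square[OF p(3) r(1) _ assms(1)] by simp
  qed
  ultimately have "M \<ge> 2" by simp
  thus ?thesis using r r' by (intro exI[of _ M] exI[of _ r] exI[of _ r']) auto
qed



lemma NM_sub_p:
  fixes B :: int
  assumes "B \<ge> 1"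
  shows "NMs 1 B \<subseteq> (\<lambda>u. u^2 - 2) ` {1..\<lfloor>sqrt (B+2)\<rfloor>} \<union>
           (\<lambda>(u,m). Q 1 u m) ` ({1..\<lfloor>B powr (1/3)\<rfloor> + 1} \<times> {3..nat \<lfloor>log (6/5) B\<rfloor>})"
proof
  fix t assume t: "t \<in> NMs 1 B"
  then obtain t' where t': "t' \<in> I_set 1 B" "t' < t" "sqfree_part (t'^2 - 4*1) = sqfree_part (t^2 - 4*1)"
    "t \<in> I_set 1 B" unfolding NMs_def by auto
  obtain M r r' where R: "M \<ge> 2" "r \<ge> 1" "r' \<ge> 1" "t^2 - M*r^2 = 4*1" "t'^2 - M*r'^2 = 4*1"
    using class_rep[of 1 t B t'] t' by auto
  have tI: "1 \<le> t'" "t \<le> B" using t' by (auto simp: I_set_def)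
  obtain u m where S: "m \<ge> 2" "t = Q 1 u m" "u \<ge> 1" "(real_of_int (u-1))^m \<le> t" "(6/5::real)^m \<le> t"
    using struct_p[OF R(1) tI(1) t'(2) R(3) R(2)] R(4,5) by auto
  have tB: "real_of_int t \<le> B" using tI by simp
  show "t \<in> (\<lambda>u. u^2 - 2) ` {1..\<lfloor>sqrt (B+2)\<rfloor>} \<union>
           (\<lambda>(u,m). Q 1 u m) ` ({1..\<lfloor>B powr (1/3)\<rfloor> + 1} \<times> {3..nat \<lfloor>log (6/5) B\<rfloor>})"
  proof (cases "m = 2")
    case True
    hence tu: "t = u^2 - 2" using S(2) by (simp add: numeral_2_eq_2 power2_eq_square)
    have "real_of_int u ^ 2 \<le> B + 2" using tu tI by (simp flip: of_int_power)
    hence "real_of_int u \<le> sqrt (B + 2)" by (rule real_le_rsqrt)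
    hence "u \<le> \<lfloor>sqrt (B+2)\<rfloor>" by (simp add: le_floor_iff)
    thus ?thesis using tu S(3) by auto
  next
    case False
    hence m3: "m \<ge> 3" using S(1) by simp
    have B1: "real_of_int B \<ge> 1" using assms by simp
    have "u - 1 \<le> \<lfloor>(real_of_int B) powr (1 / real (3::nat))\<rfloor>"
      by (rule root_bound[OF B1 _ m3]) (use S tB in auto)
    hence u: "u \<in> {1..\<lfloor>B powr (1/3)\<rfloor> + 1}" using S(3) by simp
    have "(6/5::real)^m \<le> B" using S(5) tB by linarith
    hence "log (6/5) ((6/5::real)^m) \<le> log (6/5) B" using B1 by (subst log_le_cancel_iff) auto
    hence "real m \<le> log (6/5) B" by (simp add: log_nat_power)
    hence "m \<le> nat \<lfloor>log (6/5) B\<rfloor>" by (simp add: le_nat_floor)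
    hence "(u, m) \<in> {1..\<lfloor>B powr (1/3)\<rfloor> + 1} \<times> {3..nat \<lfloor>log (6/5) B\<rfloor>}" using u m3 by simp
    thus ?thesis using S(2) by force
  qed
qed

lemma NM_sub_n:
  fixes B :: int
  assumes "B \<ge> 1"
  shows "NMs (-1) B \<subseteq> (\<lambda>u. u^3 + 3*u) ` {1..\<lfloor>B powr (1/3)\<rfloor>} \<union>
           (\<lambda>(u,k). Q (-1) u k) ` ({1..\<lfloor>(B+1) powr (1/5)\<rfloor>} \<times> {5..nat \<lfloor>log (6/5) (B+1)\<rfloor>})"
proof
  fix t assume t: "t \<in> NMs (-1) B"
  then obtain t' where t': "t' \<in> I_set (-1) B" "t' < t" "sqfree_part (t'^2 - 4*(-1)) = sqfree_part (t^2 - 4*(-1))"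
    "t \<in> I_set (-1) B" unfolding NMs_def by auto
  obtain M r r' where R: "M \<ge> 2" "r \<ge> 1" "r' \<ge> 1" "t^2 - M*r^2 = 4*(-1)" "t'^2 - M*r'^2 = 4*(-1)"
    using class_rep[of "-1" t B t'] t' by auto
  have tI: "1 \<le> t'" "t \<le> B" using t' by (auto simp: I_set_def)
  obtain u k where S: "u \<ge> 1" "t = Q (-1) u k"
      "k = 3 \<or> (k \<ge> 5 \<and> (real_of_int u)^k \<le> t + 1 \<and> (6/5::real)^k \<le> t + 1)"
    using struct_n[OF R(1) tI(1) t'(2) R(3) R(2)] R(4,5) by auto
  have tB: "real_of_int t \<le> B" using tI by simp
  have B1: "real_of_int B \<ge> 1" using assms by simp
  show "t \<in> (\<lambda>u. u^3 + 3*u) ` {1..\<lfloor>B powr (1/3)\<rfloor>} \<union>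
           (\<lambda>(u,k). Q (-1) u k) ` ({1..\<lfloor>(B+1) powr (1/5)\<rfloor>} \<times> {5..nat \<lfloor>log (6/5) (B+1)\<rfloor>})"
  proof (cases "k = 3")
    case True
    hence tu: "t = u^3 + 3*u" using S(2) by (simp add: numeral_3_eq_3 power3_eq_cube algebra_simps)
    have "real_of_int u ^ 3 \<le> B" using tu tI S(1) by (simp flip: of_int_power)
    hence "u \<le> \<lfloor>(real_of_int B) powr (1 / real (3::nat))\<rfloor>"
      by (intro root_bound[OF B1]) (use S in auto)
    thus ?thesis using tu S(1) by auto
  next
    case False
    hence k5: "k \<ge> 5" "(real_of_int u)^k \<le> t + 1" "(6/5::real)^k \<le> t + 1" using S(3) by auto
    have B1': "real_of_int B + 1 \<ge> 1" using assms by simp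
    have "u \<le> \<lfloor>(real_of_int B + 1) powr (1 / real (5::nat))\<rfloor>"
      by (rule root_bound[OF B1' _ k5(1)]) (use S k5 tB in auto)
    hence u: "u \<in> {1..\<lfloor>(B+1) powr (1/5)\<rfloor>}" using S(1) by simp
    have "(6/5::real)^k \<le> B + 1" using k5 tB by linarith
    hence "log (6/5) ((6/5::real)^k) \<le> log (6/5) (B+1)" using B1 by (subst log_le_cancel_iff) auto
    hence "real k \<le> log (6/5) (B+1)" by (simp add: log_nat_power)
    hence "k \<le> nat \<lfloor>log (6/5) (B+1)\<rfloor>" by (simp add: le_nat_floor)
    hence "(u, k) \<in> {1..\<lfloor>(B+1) powr (1/5)\<rfloor>} \<times> {5..nat \<lfloor>log (6/5) (B+1)\<rfloor>}" using u k5 by simp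
    thus ?thesis using S(2) by force
  qed
qed

lemma NM_sup_p:
  fixes B :: int
  assumes "B \<ge> 1"
  shows "(\<lambda>u. u^2 - 2) ` {3..\<lfloor>sqrt B\<rfloor>} \<subseteq> NMs 1 B"
proof
  fix t assume "t \<in> (\<lambda>u. u^2 - 2) ` {3..\<lfloor>sqrt B\<rfloor>}"
  then obtain u where u: "t = u^2 - 2" "3 \<le> u" "u \<le> \<lfloor>sqrt B\<rfloor>" by auto
  have "real_of_int u \<le> sqrt B" using u(3) by (simp add: le_floor_iff)
  hence "(real_of_int u)^2 \<le> B" using u(2) assms
    by (metis of_int_0_le_iff real_sqrt_le_iff real_sqrt_unique order_trans zero_le_numeral zero_le_power2 real_sqrt_pow2 power_mono)
  hence uB: "u^2 \<le> B" by (simp flip: of_int_power) 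
  have u9: "u^2 \<ge> 9" using u(2) power_mono[of 3 u 2] by simp
  have "u * 1 \<le> u * u" using u(2) by (intro mult_left_mono) auto
  hence "u \<le> u^2" by (simp add: power2_eq_square)
  hence uI: "u \<in> I_set 1 B" unfolding I_set_def using u9 uB u(2) by auto
  have t7: "t \<ge> 7" using u9 u(1) by simp
  hence "t^2 \<ge> 7^2" by (intro power_mono) auto
  hence tI: "t \<in> I_set 1 B" unfolding I_set_def using u9 uB u(1) t7 by auto
  have "u * 3 \<le> u * u" using u(2) by (intro mult_left_mono) auto
  moreover have "t = u * u - 2" using u(1) by (simp add: power2_eq_square)
  ultimately have lt: "u < t" using u(2) by linarith
  have "t^2 - 4*1 = (u^2 - 4) * u^2" unfolding u(1) by (simp add: power2_eq_square algebra_simps)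
  hence "sqfree_part (t^2 - 4*1) = sqfree_part (u^2 - 4*1)"
    using sqfree_part_mult_sq[of "u^2 - 4" u] u9 u(2) by simp
  thus "t \<in> NMs 1 B" unfolding NMs_def using uI tI lt by auto
qed

lemma NM_sup_n:
  fixes B :: int
  assumes "B \<ge> 1"
  shows "(\<lambda>u. u^3 + 3*u) ` {1..\<lfloor>B powr (1/3)\<rfloor> - 1} \<subseteq> NMs (-1) B"
proof
  fix t assume "t \<in> (\<lambda>u. u^3 + 3*u) ` {1..\<lfloor>B powr (1/3)\<rfloor> - 1}"
  then obtain u where u: "t = u^3 + 3*u" "1 \<le> u" "u + 1 \<le> \<lfloor>B powr (1/3)\<rfloor>" by auto
  have "real_of_int (u + 1) \<le> B powr (1/3)" using u(3) by (simp add: le_floor_iff)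
  hence "(real_of_int (u+1))^3 \<le> (B powr (1 / real (3::nat)))^3" using u(2) by (intro power_mono) auto
  also have "\<dots> = B" using powr_k[of "real_of_int B" 3] assms by simp
  finally have "real_of_int ((u+1)^3) \<le> real_of_int B" by simp
  hence "(u+1)^3 \<le> B" by (simp only: of_int_le_iff)
  moreover have "t \<le> (u+1)^3" unfolding u(1) using u(2) by (simp add: power3_eq_cube algebra_simps)
  ultimately have tB: "t \<le> B" by simp
  have "u^3 \<ge> 0" using u(2) by simp
  hence lt: "u < t" using u(1,2) by linarith
  have uI: "u \<in> I_set (-1) B" unfolding I_set_def using u(2) lt tB
    by (auto simp: add_nonneg_pos)
  have tI: "t \<in> I_set (-1) B" unfolding I_set_def using u(2) lt tB by (auto simp: add_nonneg_pos)
  have "t^2 - 4*(-1) = (u^2 + 4) * (u^2+1)^2" unfolding u(1) by (simp add: power2_eq_square power3_eq_cube algebra_simps)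
  hence "sqfree_part (t^2 - 4*(-1)) = sqfree_part (u^2 - 4*(-1))"
  proof -
    have "u^2 \<ge> 0" by simp
    hence "0 < u^2 + 4" "u^2 + 1 \<noteq> 0" by linarith+
    thus ?thesis using sqfree_part_mult_sq[of "u^2 + 4" "u^2+1"] \<open>t^2 - 4*(-1) = _\<close> by simp
  qed
  thus "t \<in> NMs (-1) B" unfolding NMs_def using uI tI lt by auto
qed



lemma real_nat_floor_le: "x \<ge> 0 \<Longrightarrow> real (nat \<lfloor>x\<rfloor>) \<le> x"
  by (simp add: of_nat_nat)

lemma card_prod_bound:
  fixes c L :: real
  assumes "c \<ge> 0" "L \<ge> 0" and that: "j \<ge> 1"
  shows "real (card ({1..\<lfloor>c\<rfloor> + 1} \<times> {j..nat \<lfloor>L\<rfloor>})) \<le> (c + 1) * L"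
proof -
  have e: "card ({1..\<lfloor>c\<rfloor> + 1} \<times> {j..nat \<lfloor>L\<rfloor>}) = nat (\<lfloor>c\<rfloor> + 1) * (Suc (nat \<lfloor>L\<rfloor>) - j)"
    by (simp add: card_cartesian_product)
  have a: "real (nat (\<lfloor>c\<rfloor> + 1)) \<le> c + 1" using assms by (simp add: of_nat_nat)
  have b: "real (Suc (nat \<lfloor>L\<rfloor>) - j) \<le> L"
  proof -
    have "Suc (nat \<lfloor>L\<rfloor>) - j \<le> nat \<lfloor>L\<rfloor>" using that by simp
    hence "real (Suc (nat \<lfloor>L\<rfloor>) - j) \<le> real (nat \<lfloor>L\<rfloor>)" by (simp only: of_nat_le_iff)
    also have "\<dots> \<le> L" using assms by (simp add: of_nat_nat)
    finally show ?thesis .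
  qed
  have "real (card ({1..\<lfloor>c\<rfloor> + 1} \<times> {j..nat \<lfloor>L\<rfloor>})) = real (nat (\<lfloor>c\<rfloor> + 1)) * real (Suc (nat \<lfloor>L\<rfloor>) - j)"
    unfolding e by simp
  also have "\<dots> \<le> (c + 1) * L" by (rule mult_mono[OF a b]) (use assms in auto)
  finally show ?thesis .
qed

lemma up_p:
  fixes B :: int assumes "B \<ge> 1"
  shows "real (card (NMs 1 B)) \<le> sqrt (B+2) + (B powr (1/3) + 1) * log (6/5) B"
proof -
  let ?A = "(\<lambda>u. u^2 - 2) ` {1..\<lfloor>sqrt (B+2)\<rfloor>}"
  let ?D = "{1..\<lfloor>B powr (1/3)\<rfloor> + 1} \<times> {3..nat \<lfloor>log (6/5) B\<rfloor>}"
  let ?H = "(\<lambda>(u,m). Q 1 u m) ` ?D"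
  have "card (NMs 1 B) \<le> card (?A \<union> ?H)" by (rule card_mono[OF _ NM_sub_p[OF assms]]) simp
  also have "\<dots> \<le> card ?A + card ?H" by (rule card_Un_le)
  finally have c: "real (card (NMs 1 B)) \<le> real (card ?A) + real (card ?H)" by linarith
  have "card ?A \<le> card {1..\<lfloor>sqrt (B+2)\<rfloor>}" by (rule card_image_le) simp
  hence "real (card ?A) \<le> real (nat \<lfloor>sqrt (B+2)\<rfloor>)" by simp
  also have "\<dots> \<le> sqrt (B+2)" by (rule real_nat_floor_le) (use assms in simp)
  finally have a: "real (card ?A) \<le> sqrt (B+2)" .
  have "card ?H \<le> card ?D" by (rule card_image_le) simp
  also have "real (card ?D) \<le> (B powr (1/3) + 1) * log (6/5) B"
    by (rule card_prod_bound) (use assms in auto)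
  finally have h: "real (card ?H) \<le> (B powr (1/3) + 1) * log (6/5) B" by simp
  show ?thesis using c a h by linarith
qed

lemma up_n:
  fixes B :: int assumes "B \<ge> 1"
  shows "real (card (NMs (-1) B)) \<le> B powr (1/3) + ((B+1) powr (1/5) + 1) * log (6/5) (B+1)"
proof -
  let ?A = "(\<lambda>u. u^3 + 3*u) ` {1..\<lfloor>B powr (1/3)\<rfloor>}"
  let ?D = "{1..\<lfloor>(B+1) powr (1/5)\<rfloor>} \<times> {5..nat \<lfloor>log (6/5) (B+1)\<rfloor>}"
  let ?D' = "{1..\<lfloor>(B+1) powr (1/5)\<rfloor> + 1} \<times> {5..nat \<lfloor>log (6/5) (B+1)\<rfloor>}"
  let ?H = "(\<lambda>(u,k). Q (-1) u k) ` ?D"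
  have "card (NMs (-1) B) \<le> card (?A \<union> ?H)" by (rule card_mono[OF _ NM_sub_n[OF assms]]) simp
  also have "\<dots> \<le> card ?A + card ?H" by (rule card_Un_le)
  finally have c: "real (card (NMs (-1) B)) \<le> real (card ?A) + real (card ?H)" by linarith
  have "card ?A \<le> card {1..\<lfloor>B powr (1/3)\<rfloor>}" by (rule card_image_le) simp
  hence "real (card ?A) \<le> real (nat \<lfloor>B powr (1/3)\<rfloor>)" by (simp only: of_nat_le_iff card_atLeastAtMost_int)
  also have "\<dots> \<le> B powr (1/3)" by (rule real_nat_floor_le) simp
  finally have a: "real (card ?A) \<le> B powr (1/3)" .
  have "card ?H \<le> card ?D" by (rule card_image_le) simp
  also have "card ?D \<le> card ?D'" by (rule card_mono) auto
  also have "real (card ?D') \<le> ((B+1) powr (1/5) + 1) * log (6/5) (B+1)"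
    by (rule card_prod_bound) (use assms in auto)
  finally have h: "real (card ?H) \<le> ((B+1) powr (1/5) + 1) * log (6/5) (B+1)" by simp
  show ?thesis using c a h by linarith
qed

lemma low_p:
  fixes B :: int assumes "B \<ge> 1"
  shows "real (card (NMs 1 B)) \<ge> sqrt B - 3"
proof -
  let ?A = "(\<lambda>u. u^2 - 2) ` {3..\<lfloor>sqrt B\<rfloor>}"
  have inj: "inj_on (\<lambda>u::int. u^2 - 2) {3..\<lfloor>sqrt B\<rfloor>}"
  proof (rule inj_onI)
    fix a b :: int assume "a \<in> {3..\<lfloor>sqrt B\<rfloor>}" "b \<in> {3..\<lfloor>sqrt B\<rfloor>}" "a^2 - 2 = b^2 - 2"
    thus "a = b" by (simp add: power2_eq_iff_nonneg)
  qed
  have "card ?A \<le> card (NMs 1 B)" by (rule card_mono[OF _ NM_sup_p[OF assms]]) (simp add: NMs_def I_fin)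
  moreover have "card ?A = nat (\<lfloor>sqrt B\<rfloor> - 2)" using card_image[OF inj] by simp
  moreover have "real (nat (\<lfloor>sqrt B\<rfloor> - 2)) \<ge> sqrt B - 3"
  proof -
    have "real_of_int (\<lfloor>sqrt B\<rfloor> - 2) \<ge> sqrt B - 3" by linarith
    thus ?thesis by linarith
  qed
  ultimately show ?thesis by (smt (verit) of_nat_le_iff)
qed

lemma low_n:
  fixes B :: int assumes "B \<ge> 1"
  shows "real (card (NMs (-1) B)) \<ge> B powr (1/3) - 2"
proof -
  let ?S = "{1..\<lfloor>B powr (1/3)\<rfloor> - 1}"
  let ?A = "(\<lambda>u. u^3 + 3*u) ` ?S"
  have mono: "a < b \<Longrightarrow> a \<ge> 1 \<Longrightarrow> a^3 + 3*a < b^3 + 3*b" for a b :: int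
  proof -
    assume "a < b" "a \<ge> 1"
    hence "a^3 < b^3" by (intro power_strict_mono) auto
    thus ?thesis using \<open>a < b\<close> by linarith
  qed
  have inj: "inj_on (\<lambda>u::int. u^3 + 3*u) ?S"
  proof (rule inj_onI)
    fix a b :: int assume ab: "a \<in> ?S" "b \<in> ?S" "a^3 + 3*a = b^3 + 3*b"
    show "a = b"
    proof (rule ccontr)
      assume "a \<noteq> b"
      hence "a < b \<or> b < a" by auto
      thus False using mono[of a b] mono[of b a] ab by auto
    qed
  qed
  have "card ?A \<le> card (NMs (-1) B)" by (rule card_mono[OF _ NM_sup_n[OF assms]]) (simp add: NMs_def I_fin)
  moreover have "card ?A = nat (\<lfloor>B powr (1/3)\<rfloor> - 1)" using card_image[OF inj] by simp
  moreover have "real (nat (\<lfloor>B powr (1/3)\<rfloor> - 1)) \<ge> B powr (1/3) - 2"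
  proof -
    have "real_of_int (\<lfloor>B powr (1/3)\<rfloor> - 1) \<ge> B powr (1/3) - 2" by linarith
    thus ?thesis by linarith
  qed
  ultimately show ?thesis by (smt (verit) of_nat_le_iff)
qed



lemma lim1: "((\<lambda>x::real. (sqrt x - 3) / x powr (1/2)) \<longlongrightarrow> 1) at_top" by real_asymp
lemma lim2: "((\<lambda>x::real. (sqrt (x+2) + (x powr (1/3) + 1) * log (6/5) x) / x powr (1/2)) \<longlongrightarrow> 1) at_top" by real_asymp
lemma lim3: "((\<lambda>x::real. (x powr (1/3) - 2) / x powr (1/3)) \<longlongrightarrow> 1) at_top" by real_asymp
lemma lim4: "((\<lambda>x::real. (x powr (1/3) + ((x+1) powr (1/5) + 1) * log (6/5) (x+1)) / x powr (1/3)) \<longlongrightarrow> 1) at_top" by real_asymp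

lemma sandwich_int:
  fixes f l h g :: "real \<Rightarrow> real" and F :: "int \<Rightarrow> real"
  assumes "(l \<longlongrightarrow> 1) at_top" "(h \<longlongrightarrow> 1) at_top"
    "\<And>B. B \<ge> 1 \<Longrightarrow> l (real_of_int B) * g (real_of_int B) \<le> F B"
    "\<And>B. B \<ge> 1 \<Longrightarrow> F B \<le> h (real_of_int B) * g (real_of_int B)"
    "\<And>B. B \<ge> 1 \<Longrightarrow> g (real_of_int B) > 0"
  shows "F \<sim>[at_top] (\<lambda>B. g (real_of_int B))"
proof (rule asymp_equivI')
  have L: "((\<lambda>B. l (real_of_int B)) \<longlongrightarrow> 1) at_top"
    by (rule filterlim_compose[OF assms(1) filterlim_real_of_int_at_top])
  have H: "((\<lambda>B. h (real_of_int B)) \<longlongrightarrow> 1) at_top"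
    by (rule filterlim_compose[OF assms(2) filterlim_real_of_int_at_top])
  show "((\<lambda>B. F B / g (real_of_int B)) \<longlongrightarrow> 1) at_top"
  proof (rule tendsto_sandwich[OF _ _ L H])
    show "\<forall>\<^sub>F B in at_top. l (real_of_int B) \<le> F B / g (real_of_int B)"
      using eventually_ge_at_top[of "1::int"]
      by eventually_elim (use assms(3,5) in \<open>simp add: pos_le_divide_eq\<close>)
    show "\<forall>\<^sub>F B in at_top. F B / g (real_of_int B) \<le> h (real_of_int B)"
      using eventually_ge_at_top[of "1::int"]
      by eventually_elim (use assms(4,5) in \<open>simp add: pos_divide_le_eq\<close>)
  qed
qed

theorem theorem4p5:
  shows "((\<lambda>B::int. real_of_int (Delta (-1) B)) \<sim>[at_top] (\<lambda>B. real_of_int B powr (1/3))) \<and>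
         ((\<lambda>B::int. real_of_int (Delta 1 B)) \<sim>[at_top] (\<lambda>B. real_of_int B powr (1/2)))"
proof
  show "(\<lambda>B::int. real_of_int (Delta (-1) B)) \<sim>[at_top] (\<lambda>B. real_of_int B powr (1/3))"
  proof (rule sandwich_int[OF lim3 lim4, where g = "\<lambda>x. x powr (1/3)"])
    fix B :: int assume B: "B \<ge> 1"
    show "real_of_int B powr (1/3) > 0" using B by simp
    show "(real_of_int B powr (1/3) - 2) / real_of_int B powr (1/3) * real_of_int B powr (1/3) \<le> real_of_int (Delta (-1) B)"
      using low_n[OF B] B by (simp add: Delta_eq)
    show "real_of_int (Delta (-1) B) \<le> (real_of_int B powr (1/3) + ((real_of_int B+1) powr (1/5) + 1) * log (6/5) (real_of_int B+1)) / real_of_int B powr (1/3) * real_of_int B powr (1/3)"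
      using up_n[OF B] B by (simp add: Delta_eq)
  qed
  show "(\<lambda>B::int. real_of_int (Delta 1 B)) \<sim>[at_top] (\<lambda>B. real_of_int B powr (1/2))"
  proof (rule sandwich_int[OF lim1 lim2, where g = "\<lambda>x. x powr (1/2)"])
    fix B :: int assume B: "B \<ge> 1"
    show "real_of_int B powr (1/2) > 0" using B by simp
    show "(sqrt (real_of_int B) - 3) / real_of_int B powr (1/2) * real_of_int B powr (1/2) \<le> real_of_int (Delta 1 B)"
      using low_p[OF B] B by (simp add: Delta_eq)
    show "real_of_int (Delta 1 B) \<le> (sqrt (real_of_int B+2) + (real_of_int B powr (1/3) + 1) * log (6/5) (real_of_int B)) / real_of_int B powr (1/2) * real_of_int B powr (1/2)"
      using up_p[OF B] B by (simp add: Delta_eq)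
  qed
qed

end
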